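(* Let $G$ be a dense $K_4^3\cup e$-free $3$-graph with $\lambda(G)>\frac{\sqrt3}{18}$. Then $G$ is $X_4$-free.
   Context: $K_4^3\cup e$ is the $3$-graph on $\{1,\dots,7\}$ with edges $\{123,124,134,234,567\}$. For a $3$-graph $G$ on $[n]$, $\lambda(G)=\max\{\sum_{e\in E(G)}\prod_{i\in e}x_i:\sum_ix_i=1,x_i\ge0\}$. An $r$-graph $G$ is dense if $\lambda(G')<\lambda(G)$ for every proper subgraph $G'$ of $G$. $X_i$ is the $3$-graph on $[2i+2]$ in which $\{1,2,2j+1,2j+2\}$ spans a $K_4^3$ for each $1\le j\le i$, and no other edges. *)

theory Defs
  imports Complex_Main
begin

definition hypergraph3 :: "'a set \<Rightarrow> 'a set set \<Rightarrow> bool" where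
  "hypergraph3 V E \<longleftrightarrow> finite V \<and> (\<forall>e\<in>E. e \<subseteq> V \<and> card e = 3)"

text \<open>Lagrangian: maximum of the edge polynomial over the standard simplex on V
  (the value 0 is added so that the graph with no vertices has Lagrangian 0;
  for nonempty V this does not change the supremum since all values are nonnegative).\<close>
definition lagrangian :: "'a set \<Rightarrow> 'a set set \<Rightarrow> real" where
  "lagrangian V E = Sup (insert 0 {(\<Sum>e\<in>E. \<Prod>i\<in>e. x i) | x.
      (\<forall>i\<in>V. 0 \<le> x i) \<and> (\<Sum>i\<in>V. x i) = 1})"

definition subgraph3 :: "'a set \<Rightarrow> 'a set set \<Rightarrow> 'a set \<Rightarrow> 'a set set \<Rightarrow> bool" where
  "subgraph3 V' E' V E \<longleftrightarrow> V' \<subseteq> V \<and> E' \<subseteq> E \<and> hypergraph3 V' E'"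

definition dense3 :: "'a set \<Rightarrow> 'a set set \<Rightarrow> bool" where
  "dense3 V E \<longleftrightarrow> (\<forall>V' E'. subgraph3 V' E' V E \<and> (V', E') \<noteq> (V, E)
      \<longrightarrow> lagrangian V' E' < lagrangian V E)"

definition contains3 :: "'a set \<Rightarrow> 'a set set \<Rightarrow> 'b set \<Rightarrow> 'b set set \<Rightarrow> bool" where
  "contains3 V E FV FE \<longleftrightarrow> (\<exists>\<phi>. inj_on \<phi> FV \<and> \<phi> ` FV \<subseteq> V \<and> (\<forall>e\<in>FE. \<phi> ` e \<in> E))"

definition free3 :: "'a set \<Rightarrow> 'a set set \<Rightarrow> 'b set \<Rightarrow> 'b set set \<Rightarrow> bool" where
  "free3 V E FV FE \<longleftrightarrow> \<not> contains3 V E FV FE"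

definition K43e_V :: "nat set" where "K43e_V = {1..7}"
definition K43e_E :: "nat set set" where
  "K43e_E = {{1,2,3},{1,2,4},{1,3,4},{2,3,4},{5,6,7}}"

definition X_V :: "nat \<Rightarrow> nat set" where "X_V i = {1..2*i+2}"
definition X_E :: "nat \<Rightarrow> nat set set" where
  "X_E i = (\<Union>j\<in>{1..i}. {e. e \<subseteq> {1, 2, 2*j+1, 2*j+2} \<and> card e = 3})"

end

theory Submission
  imports Defs
begin

lemma helper_single:
  fixes x :: "'a \<Rightarrow> real"
  assumes fS: "finite S" and fR: "finite R"
    and P: "\<forall>p\<in>P. S \<subseteq> p \<and> finite p \<and> card p = card S + 1 \<and> p - S \<subseteq> R"
    and nn: "\<forall>i\<in>R. 0 \<le> x i" and nS: "0 \<le> prod x S"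
  shows "(\<Sum>p\<in>P. prod x p) \<le> prod x S * sum x R"
proof -
  have key: "\<exists>v. v \<notin> S \<and> v \<in> R \<and> p = insert v S" if "p \<in> P" for p
  proof -
    from P that have h: "S \<subseteq> p" "finite p" "card p = card S + 1" "p - S \<subseteq> R" by auto
    have "card (p - S) = 1" using h fS by (simp add: card_Diff_subset)
    then obtain v where v: "p - S = {v}" using card_1_singletonE by blast
    then show ?thesis using h by auto
  qed
  define g where "g p = the_elem (p - S)" for p
  have g: "g p \<notin> S \<and> g p \<in> R \<and> p = insert (g p) S" if pP: "p\<in>P" for p
  proof -
    obtain v where v: "v \<notin> S" "v \<in> R" "p = insert v S" using key[OF pP] by blast
    have "p - S = {v}" using v by auto
    then have "g p = v" unfolding g_def by simp
    then show ?thesis using v by simp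
  qed
  have inj: "inj_on g P" by (rule inj_onI) (metis g)
  have "(\<Sum>p\<in>P. prod x p) = (\<Sum>p\<in>P. prod x S * x (g p))"
  proof (rule sum.cong)
    fix p assume "p \<in> P"
    then have gp: "g p \<notin> S" "p = insert (g p) S" using g by auto
    have "prod x p = prod x (insert (g p) S)" using gp(2) by simp
    also have "\<dots> = x (g p) * prod x S" using prod.insert[OF fS gp(1)] .
    finally show "prod x p = prod x S * x (g p)" by simp
  qed simp
  also have "\<dots> = prod x S * sum x (g ` P)" by (simp add: sum_distrib_left sum.reindex[OF inj])
  also have "\<dots> \<le> prod x S * sum x R"
    apply (rule mult_left_mono[OF _ nS]) apply (rule sum_mono2[OF fR]) using g nn by auto
  finally show ?thesis .
qed

lemma pairs_bound:
  fixes x :: "'a \<Rightarrow> real"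
  assumes "finite R" "\<forall>i\<in>R. 0 \<le> x i"
  shows "\<forall>P. (\<forall>p\<in>P. p \<subseteq> R \<and> card p = 2) \<longrightarrow> (\<Sum>p\<in>P. prod x p) \<le> (sum x R)^2/2"
  using assms
proof (induction R rule: finite_induct)
  case empty
  show ?case
  proof (intro allI impI)
    fix P :: "'a set set" assume "\<forall>p\<in>P. p \<subseteq> {} \<and> card p = 2"
    then have "P = {}" by force
    then show "(\<Sum>p\<in>P. prod x p) \<le> (sum x {})^2/2" by simp
  qed
next
  case (insert w R)
  show ?case
  proof (intro allI impI)
    fix P :: "'a set set" assume hP: "\<forall>p\<in>P. p \<subseteq> insert w R \<and> card p = 2"
    let ?P1 = "{p\<in>P. w\<in>p}" let ?P0 = "{p\<in>P. w\<notin>p}"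
    have finP: "finite P" using hP insert(1) finite_subset[of P "Pow (insert w R)"] by auto
    have "P = ?P1 \<union> ?P0" by auto
    then have split: "(\<Sum>p\<in>P. prod x p) = (\<Sum>p\<in>?P1. prod x p) + (\<Sum>p\<in>?P0. prod x p)"
      using finP by (metis (no_types, lifting) sum.union_disjoint finite_Un disjoint_iff mem_Collect_eq)
    have nnR: "\<forall>i\<in>R. 0 \<le> x i" and xw: "0 \<le> x w" using insert(4) by auto
    have s0: "(\<Sum>p\<in>?P0. prod x p) \<le> (sum x R)^2/2"
      using insert(3)[OF nnR, rule_format, of ?P0] hP by blast
    have s1: "(\<Sum>p\<in>?P1. prod x p) \<le> prod x {w} * sum x R"
    proof (rule helper_single)
      show "\<forall>p\<in>?P1. {w} \<subseteq> p \<and> finite p \<and> card p = card {w} + 1 \<and> p - {w} \<subseteq> R"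
      proof
        fix p assume "p \<in> ?P1"
        then have "w \<in> p" "p \<subseteq> insert w R" "card p = 2" using hP by auto
        then show "{w} \<subseteq> p \<and> finite p \<and> card p = card {w} + 1 \<and> p - {w} \<subseteq> R"
          by (auto intro: card_ge_0_finite)
      qed
    qed (use insert nnR xw in auto)
    have "sum x (insert w R) = x w + sum x R" using insert by simp
    moreover have "x w * sum x R + (sum x R)^2/2 \<le> (x w + sum x R)^2/2"
      by (simp add: power2_eq_square algebra_simps)
    ultimately show "(\<Sum>p\<in>P. prod x p) \<le> (sum x (insert w R))^2/2"
      using split s0 s1 by simp
  qed
qed

lemma one_vertex:
  fixes x :: "'a \<Rightarrow> real"
  assumes F: "\<forall>e\<in>F. a\<in>e \<and> finite e \<and> card e = 3 \<and> e - {a} \<subseteq> R" and fF: "finite F"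
    and fR: "finite R" and nnR: "\<forall>i\<in>R. 0 \<le> x i" and xa: "0 \<le> x a"
  shows "(\<Sum>e\<in>F. prod x e) \<le> x a * (sum x R)^2/2"
proof -
  have inj: "inj_on (\<lambda>e. e - {a}) F"
  proof (rule inj_onI)
    fix e f assume "e \<in> F" "f \<in> F" "e - {a} = f - {a}"
    then show "e = f" using F by (metis insert_Diff)
  qed
  have "(\<Sum>e\<in>F. prod x e) = (\<Sum>e\<in>F. x a * prod x (e - {a}))"
    using F by (intro sum.cong) (auto simp: prod.remove)
  also have "\<dots> = x a * (\<Sum>p\<in>(\<lambda>e. e - {a}) ` F. prod x p)"
    by (simp add: sum_distrib_left sum.reindex[OF inj])
  also have "\<dots> \<le> x a * ((sum x R)^2/2)"
  proof (rule mult_left_mono[OF _ xa])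
    show "(\<Sum>p\<in>(\<lambda>e. e - {a}) ` F. prod x p) \<le> (sum x R)^2/2"
    proof -
      have "\<forall>p\<in>(\<lambda>e. e - {a}) ` F. p \<subseteq> R \<and> card p = 2"
        using F by (auto simp: card_Diff_singleton)
      then show ?thesis using pairs_bound[OF fR nnR] by blast
    qed
  qed
  finally show ?thesis by simp
qed

lemma cubic:
  fixes s :: real
  assumes "0 \<le> s"
  shows "s - s^3 \<le> 2 * sqrt 3 / 9"
proof -
  define r where "r = sqrt 3"
  have r2: "r^2 = 3" unfolding r_def by simp
  have r0: "0 \<le> r" unfolding r_def by simp
  have "2*r/9 - s + s^3 = (s - r/3)^2 * (s + 2*r/3)"
    by (simp add: power2_eq_square power3_eq_cube algebra_simps r2[unfolded power2_eq_square] field_simps)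
  moreover have "0 \<le> (s - r/3)^2 * (s + 2*r/3)" using assms r0 by simp
  ultimately show ?thesis unfolding r_def by linarith
qed

lemma lag_bound:
  fixes x :: "'a \<Rightarrow> real"
  assumes fV: "finite V" and E: "\<forall>e\<in>E. e \<subseteq> V \<and> card e = 3" and ab: "a\<in>V" "b\<in>V" "a\<noteq>b"
    and cov: "\<forall>e\<in>E. a\<in>e \<or> b\<in>e" and nn: "\<forall>i\<in>V. 0 \<le> x i" and s1: "sum x V = 1"
  shows "(\<Sum>e\<in>E. prod x e) \<le> sqrt 3/18"
proof -
  define R where "R = V - {a,b}"
  define s where "s = sum x R"
  have fR: "finite R" using fV R_def by simp
  have nnR: "\<forall>i\<in>R. 0 \<le> x i" using nn R_def by simp
  have s0: "0 \<le> s" unfolding s_def using nnR by (simp add: sum_nonneg)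
  have xa: "0 \<le> x a" and xb: "0 \<le> x b" using nn ab by auto
  have Veq: "V = insert a (insert b R)" using ab R_def by auto
  have "sum x V = sum x (insert a (insert b R))" using Veq by simp
  also have "\<dots> = x a + x b + s" using ab fR unfolding R_def s_def by simp
  finally have "sum x V = x a + x b + s" .
  then have tot: "x a + x b + s = 1" using s1 by simp
  have finE: "finite E" using E fV by (metis Pow_iff finite_Pow_iff finite_subset subsetI)
  define E1 where "E1 = {e\<in>E. a\<in>e \<and> b\<in>e}"
  define E2 where "E2 = {e\<in>E. a\<in>e \<and> b\<notin>e}"
  define E3 where "E3 = {e\<in>E. b\<in>e \<and> a\<notin>e}"
  have EE: "E = E1 \<union> E2 \<union> E3" using cov unfolding E1_def E2_def E3_def by auto
  have fins: "finite E1" "finite E2" "finite E3" using finE unfolding E1_def E2_def E3_def by auto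
  have sumE: "(\<Sum>e\<in>E. prod x e) = (\<Sum>e\<in>E1. prod x e) + (\<Sum>e\<in>E2. prod x e) + (\<Sum>e\<in>E3. prod x e)"
  proof -
    have "(\<Sum>e\<in>E. prod x e) = (\<Sum>e\<in>E1 \<union> E2. prod x e) + (\<Sum>e\<in>E3. prod x e)"
      unfolding EE by (rule sum.union_disjoint) (use fins in \<open>auto simp: E1_def E2_def E3_def\<close>)
    also have "(\<Sum>e\<in>E1 \<union> E2. prod x e) = (\<Sum>e\<in>E1. prod x e) + (\<Sum>e\<in>E2. prod x e)"
      by (rule sum.union_disjoint) (use fins in \<open>auto simp: E1_def E2_def E3_def\<close>)
    finally show ?thesis .
  qed
  have h1: "(\<Sum>e\<in>E1. prod x e) \<le> prod x {a,b} * s"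
    unfolding s_def
  proof (rule helper_single)
    show "\<forall>p\<in>E1. {a, b} \<subseteq> p \<and> finite p \<and> card p = card {a, b} + 1 \<and> p - {a, b} \<subseteq> R"
      using E ab fV unfolding E1_def R_def by (auto intro: card_ge_0_finite)
  qed (use fR nnR xa xb ab in auto)
  have h2: "(\<Sum>e\<in>E2. prod x e) \<le> x a * s^2/2"
    unfolding s_def
    by (rule one_vertex[OF _ fins(2) fR nnR xa])
       (use E ab in \<open>auto simp: E2_def R_def intro: card_ge_0_finite\<close>)
  have h3: "(\<Sum>e\<in>E3. prod x e) \<le> x b * s^2/2"
    unfolding s_def
    by (rule one_vertex[OF _ fins(3) fR nnR xb])
       (use E ab in \<open>auto simp: E3_def R_def intro: card_ge_0_finite\<close>)
  have pab: "prod x {a,b} = x a * x b" using ab by simp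
  have am: "x a * x b \<le> (1 - s)^2/4"
  proof -
    have "0 \<le> (x a - x b)^2" by simp
    then have "x a * x b \<le> (x a + x b)^2/4" by (simp add: power2_eq_square algebra_simps)
    moreover have "1 - s = x a + x b" using tot by simp
    ultimately show ?thesis by simp
  qed
  have "(\<Sum>e\<in>E. prod x e) \<le> x a * x b * s + (x a + x b) * s^2/2"
    using sumE h1 h2 h3 pab by (simp add: algebra_simps add_divide_distrib)
  also have "\<dots> \<le> (1 - s)^2/4 * s + (1 - s) * s^2/2"
  proof -
    have "x a * x b * s \<le> (1 - s)^2/4 * s" using am s0 by (rule mult_right_mono)
    moreover have "x a + x b = 1 - s" using tot by simp
    ultimately show ?thesis by simp
  qed
  also have "\<dots> = (s - s^3)/4" by (simp add: power2_eq_square power3_eq_cube field_simps)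
  also have "\<dots> \<le> sqrt 3/18" using cubic[OF s0] by simp
  finally show ?thesis .
qed

lemma K4e:
  assumes E4: "{a,b,c}\<in>E" "{a,b,d}\<in>E" "{a,c,d}\<in>E" "{b,c,d}\<in>E"
    and dist: "a\<noteq>b" "a\<noteq>c" "a\<noteq>d" "b\<noteq>c" "b\<noteq>d" "c\<noteq>d"
    and eE: "e\<in>E" "card e = 3" "e \<inter> {a,b,c,d} = {}"
    and inV: "a\<in>V" "b\<in>V" "c\<in>V" "d\<in>V" "e \<subseteq> V"
  shows "contains3 V E K43e_V K43e_E"
proof -
  obtain p q r where e: "e = {p,q,r}" "p\<noteq>q" "q\<noteq>r" "p\<noteq>r" using eE(2) card_3_iff by metis
  define \<psi> where "\<psi> n = (if n=1 then a else if n=2 then b else if n=3 then c else if n=4 then d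
     else if n=5 then p else if n=6 then q else r)" for n :: nat
  have V7: "K43e_V = {1,2,3,4,5,6,7}" by (auto simp: K43e_V_def)
  have inj: "inj_on \<psi> K43e_V"
    unfolding V7 inj_on_def using dist e eE(3) by (auto simp: \<psi>_def)
  have im: "\<psi> ` K43e_V \<subseteq> V" unfolding V7 using inV e by (auto simp: \<psi>_def)
  have ed: "\<forall>f\<in>K43e_E. \<psi> ` f \<in> E" unfolding K43e_E_def using E4 eE(1) e
    by (auto simp: \<psi>_def insert_commute)
  show ?thesis unfolding contains3_def using inj im ed by blast
qed

theorem lemma5p10:
  fixes V :: "'a set" and E :: "'a set set"
  assumes "hypergraph3 V E"
    and "dense3 V E"
    and "free3 V E K43e_V K43e_E"
    and "lagrangian V E > sqrt 3 / 18"
  shows "free3 V E (X_V 4) (X_E 4)"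
proof -
  have fV: "finite V" and hE: "\<forall>e\<in>E. e \<subseteq> V \<and> card e = 3"
    using assms(1) by (auto simp: hypergraph3_def)
  show ?thesis unfolding free3_def
  proof
    assume "contains3 V E (X_V 4) (X_E 4)"
    then obtain \<phi> where inj: "inj_on \<phi> {1..10::nat}" and img: "\<phi> ` {1..10} \<subseteq> V"
      and ed: "\<forall>e\<in>X_E 4. \<phi> ` e \<in> E"
      by (auto simp: contains3_def X_V_def)
    define a where "a = \<phi> 1"
    define b where "b = \<phi> 2"
    have Xe: "e \<in> X_E 4" if "e \<subseteq> {1,2,2*j+1,2*j+2}" "card e = 3" "1 \<le> j" "j \<le> 4" for e j
      using that unfolding X_E_def by auto
    have inV: "\<phi> i \<in> V" if "1 \<le> i" "i \<le> 10" for i using img that by auto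
    have phieq: "\<phi> i = \<phi> j \<longleftrightarrow> i = j" if "1 \<le> i" "i \<le> 10" "1 \<le> j" "j \<le> 10" for i j
      using inj that by (auto simp: inj_on_eq_iff)
    have edge: "\<phi> ` {u,v,w} \<in> E" if "{u,v,w} \<subseteq> {1,2,2*j+1,2*j+2}" "card {u,v,w} = 3" "1 \<le> j" "j \<le> 4" for u v w j
      using ed Xe[OF that] by blast
    have cov: "\<forall>e\<in>E. a\<in>e \<or> b\<in>e"
    proof (rule ballI, rule ccontr)
      fix e assume eE: "e \<in> E" and nab: "\<not> (a\<in>e \<or> b\<in>e)"
      have hit: "e \<inter> {\<phi>(2*j+1), \<phi>(2*j+2)} \<noteq> {}" if j: "1 \<le> j" "j \<le> 4" for j
      proof
        assume dj: "e \<inter> {\<phi>(2*j+1), \<phi>(2*j+2)} = {}"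
        let ?c = "\<phi>(2*j+1)" let ?d = "\<phi>(2*j+2)"
        have "contains3 V E K43e_V K43e_E"
        proof (rule K4e[of a b ?c E ?d e])
          show "{a,b,?c} \<in> E" using edge[of 1 2 "2*j+1" j] j unfolding a_def b_def by auto
          show "{a,b,?d} \<in> E" using edge[of 1 2 "2*j+2" j] j unfolding a_def b_def by auto
          show "{a,?c,?d} \<in> E" using edge[of 1 "2*j+1" "2*j+2" j] j unfolding a_def b_def by auto
          show "{b,?c,?d} \<in> E" using edge[of 2 "2*j+1" "2*j+2" j] j unfolding a_def b_def by auto
        qed (use j dj nab eE hE inV phieq in \<open>auto simp: a_def b_def\<close>)
        then show False using assms(3) by (simp add: free3_def)
      qed
      define g where "g j = (SOME v. v \<in> e \<inter> {\<phi>(2*j+1), \<phi>(2*j+2)})" for j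
      have gj: "g j \<in> e \<inter> {\<phi>(2*j+1), \<phi>(2*j+2)}" if "1 \<le> j" "j \<le> 4" for j
        unfolding g_def using hit[OF that] by (metis ex_in_conv someI_ex)
      have "inj_on g {1..4}"
      proof (rule inj_onI)
        fix i j assume i: "i \<in> {1..(4::nat)}" and j: "j \<in> {1..(4::nat)}" and eq: "g i = g j"
        have "g i \<in> {\<phi>(2*i+1), \<phi>(2*i+2)}" "g j \<in> {\<phi>(2*j+1), \<phi>(2*j+2)}" using gj i j by auto
        then show "i = j" using eq i j phieq by auto
      qed
      moreover have "g ` {1..4} \<subseteq> e" using gj by auto
      moreover have "finite e" using eE hE fV finite_subset by blast
      ultimately have "card {1..(4::nat)} \<le> card e" by (metis card_inj_on_le)
      then show False using eE hE by simp
    qed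
    have ab: "a \<in> V" "b \<in> V" "a \<noteq> b" using inV phieq unfolding a_def b_def by auto
    have "lagrangian V E \<le> sqrt 3 / 18"
      unfolding lagrangian_def
    proof (rule cSup_least)
      fix y :: real assume "y \<in> insert 0 {(\<Sum>e\<in>E. \<Prod>i\<in>e. x i) | x.
        (\<forall>i\<in>V. 0 \<le> x i) \<and> (\<Sum>i\<in>V. x i) = 1}"
      then show "y \<le> sqrt 3 / 18"
        using lag_bound[OF fV hE ab cov] by auto
    qed simp
    then show False using assms(4) by simp
  qed
qed

end
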